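(* Let $G(\circ)$, $G(\ast)$ be groups on $G$ with the same neutral element $1$, and let $f:G\to G$ be a bijection such that $\mathrm{dist}([\circ],[\ast])=\mathrm{dist}(\circ_f,\ast)$. Then either $f(1)=1$, or else $\circ_f=\ast_\ell$ for some transposition $\ell$ of $G$ and $\mathrm{dist}([\circ],[\ast])=\mathrm{dist}(\ast_\ell,\ast)$.
   Context: $G$ is a finite set. For group operations $\circ,\ast$ on $G$, $\mathrm{dist}(\circ,\ast)=|\{(a,b)\in G\times G: a\circ b\ne a\ast b\}|$. For a bijection $f:G\to G$, $\circ_f$ is the operation $a\circ_f b=f(f^{-1}(a)\circ f^{-1}(b))$ (so $f:G(\circ)\to G(\circ_f)$ is an isomorphism). $[\circ]$ is the set of all group operations on $G$ giving groups isomorphic to $G(\circ)$, and $\mathrm{dist}([\circ],[\ast])=\min\{\mathrm{dist}(\bullet,\star): \bullet\in[\circ],\ \star\in[\ast],\ G(\bullet)\ne G(\star)\}$. *)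

theory Defs
  imports "HOL-Algebra.Group" "HOL-Combinatorics.Transposition"
begin

text \<open>A binary operation on the whole (finite) type, viewed as a HOL-Algebra structure
  whose unit is the (unique, if it exists) two-sided identity of the operation.\<close>
definition gstr :: "('a \<Rightarrow> 'a \<Rightarrow> 'a) \<Rightarrow> 'a monoid" where
  "gstr op = \<lparr>carrier = UNIV, mult = op, one = (SOME e. \<forall>x. op e x = x \<and> op x e = x)\<rparr>"

definition is_group_op :: "('a \<Rightarrow> 'a \<Rightarrow> 'a) \<Rightarrow> bool" where
  "is_group_op op \<longleftrightarrow> group (gstr op)"

definition opdist :: "('a::finite \<Rightarrow> 'a \<Rightarrow> 'a) \<Rightarrow> ('a \<Rightarrow> 'a \<Rightarrow> 'a) \<Rightarrow> nat" where
  "opdist op1 op2 = card {(a, b). op1 a b \<noteq> op2 a b}"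

definition transport :: "('a \<Rightarrow> 'a) \<Rightarrow> ('a \<Rightarrow> 'a \<Rightarrow> 'a) \<Rightarrow> ('a \<Rightarrow> 'a \<Rightarrow> 'a)" where
  "transport f op = (\<lambda>a b. f (op (Hilbert_Choice.inv f a) (Hilbert_Choice.inv f b)))"

definition iso_class :: "('a \<Rightarrow> 'a \<Rightarrow> 'a) \<Rightarrow> ('a \<Rightarrow> 'a \<Rightarrow> 'a) set" where
  "iso_class op = {s. is_group_op s \<and> gstr op \<cong> gstr s}"

definition class_dist :: "('a::finite \<Rightarrow> 'a \<Rightarrow> 'a) \<Rightarrow> ('a \<Rightarrow> 'a \<Rightarrow> 'a) \<Rightarrow> nat" where
  "class_dist op1 op2 =
     Min {opdist p q | p q. p \<in> iso_class op1 \<and> q \<in> iso_class op2 \<and> p \<noteq> q}"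

end

theory Submission
  imports Defs
begin

lemma grp_facts:
  assumes "group \<lparr>carrier = UNIV, mult = op, one = e\<rparr>"
  shows "op e b = b" "op b e = b" "op a b = b \<Longrightarrow> a = e" "op a b = a \<Longrightarrow> b = e"
    "op x y = op x z \<Longrightarrow> y = z" "op y x = op z x \<Longrightarrow> y = z"
proof -
  interpret G: group "\<lparr>carrier = UNIV, mult = op, one = e\<rparr>" by (rule assms)
  show "op e b = b" using G.l_one[of b] by simp
  show "op b e = b" using G.r_one[of b] by simp
  show "op a b = b \<Longrightarrow> a = e" using G.r_cancel_one[of b a] by simp
  show "op a b = a \<Longrightarrow> b = e" using G.l_cancel_one[of a b] by simp
  show "op x y = op x z \<Longrightarrow> y = z" using G.Units_l_cancel[of x y z] G.Units_eq by simp
  show "op y x = op z x \<Longrightarrow> y = z" using G.right_cancel[of x y z] by simp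
qed

lemma gstr_eq:
  assumes "group \<lparr>carrier = UNIV, mult = op, one = e\<rparr>"
  shows "gstr op = \<lparr>carrier = UNIV, mult = op, one = e\<rparr>"
proof -
  have "(SOME e'. \<forall>x. op e' x = x \<and> op x e' = x) = e"
  proof (rule some_equality)
    show "\<forall>x. op e x = x \<and> op x e = x" using grp_facts[OF assms] by blast
    fix e' assume "\<forall>x. op e' x = x \<and> op x e' = x"
    hence "op e' e = e" by blast
    thus "e' = e" using grp_facts(2)[OF assms, of e'] by simp
  qed
  thus ?thesis unfolding gstr_def by simp
qed

lemma transport_app:
  assumes "bij g"
  shows "transport g op (g x) (g y) = g (op x y)"
  using assms unfolding transport_def by (simp add: bij_is_inj)

lemma transport_group:
  assumes G: "group \<lparr>carrier = UNIV, mult = op, one = e\<rparr>" and g: "bij g"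
  shows "group \<lparr>carrier = UNIV, mult = transport g op, one = g e\<rparr>"
    "gstr op \<cong> gstr (transport g op)"
    "is_group_op (transport g op)"
proof -
  have ap: "\<And>x y. transport g op (g x) (g y) = g (op x y)" using transport_app[OF g] .
  have sg: "\<And>x. g (Hilbert_Choice.inv g x) = x" using g by (simp add: bij_is_surj surj_f_inv_f)
  interpret G: group "\<lparr>carrier = UNIV, mult = op, one = e\<rparr>" by (rule G)
  show GR: "group \<lparr>carrier = UNIV, mult = transport g op, one = g e\<rparr>"
  proof (rule groupI, simp_all)
    fix x y z
    have "transport g op (transport g op (g (Hilbert_Choice.inv g x)) (g (Hilbert_Choice.inv g y))) (g (Hilbert_Choice.inv g z))
      = transport g op (g (Hilbert_Choice.inv g x)) (transport g op (g (Hilbert_Choice.inv g y)) (g (Hilbert_Choice.inv g z)))"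
      unfolding ap using G.m_assoc[of "Hilbert_Choice.inv g x" "Hilbert_Choice.inv g y" "Hilbert_Choice.inv g z"] by simp
    thus "transport g op (transport g op x y) z = transport g op x (transport g op y z)"
      unfolding sg .
  next
    fix x
    show "transport g op (g e) x = x" using ap[of e "Hilbert_Choice.inv g x"] sg grp_facts(1)[OF G, of "Hilbert_Choice.inv g x"] by simp
  next
    fix x
    obtain y where "op y (Hilbert_Choice.inv g x) = e" using G.l_inv_ex[of "Hilbert_Choice.inv g x"] by auto
    hence "transport g op (g y) x = g e" using ap[of y "Hilbert_Choice.inv g x"] sg by simp
    thus "\<exists>y. transport g op y x = g e" by blast
  qed
  have "g \<in> iso (gstr op) (gstr (transport g op))"
    unfolding gstr_eq[OF G] gstr_eq[OF GR]
    proof (rule isoI)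
    show "g \<in> hom \<lparr>carrier = UNIV, mult = op, one = e\<rparr> \<lparr>carrier = UNIV, mult = transport g op, one = g e\<rparr>"
      unfolding hom_def by (simp add: ap)
    show "bij_betw g (carrier \<lparr>carrier = UNIV, mult = op, one = e\<rparr>) (carrier \<lparr>carrier = UNIV, mult = transport g op, one = g e\<rparr>)"
      using g by simp
  qed
  thus "gstr op \<cong> gstr (transport g op)" by (rule is_isoI)
  show "is_group_op (transport g op)" unfolding is_group_op_def gstr_eq[OF GR] by (rule GR)
qed


lemma class_dist_le:
  fixes op1 op2 :: "'a::finite \<Rightarrow> 'a \<Rightarrow> 'a"
  assumes "p \<in> iso_class op1" "q \<in> iso_class op2" "p \<noteq> q"
  shows "class_dist op1 op2 \<le> opdist p q"
proof -
  let ?M = "{opdist p q | p q. p \<in> iso_class op1 \<and> q \<in> iso_class op2 \<and> p \<noteq> q}"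
  have "?M \<subseteq> {..card (UNIV :: ('a \<times> 'a) set)}"
    unfolding opdist_def by (auto intro!: card_mono)
  hence "finite ?M" by (rule finite_subset) simp
  moreover have "opdist p q \<in> ?M" using assms by blast
  ultimately show ?thesis unfolding class_dist_def by (rule Min_le)
qed

lemma in_iso_class_self:
  assumes "group \<lparr>carrier = UNIV, mult = op, one = e\<rparr>"
  shows "op \<in> iso_class op"
  using gstr_eq[OF assms] assms by (simp add: iso_class_def is_group_op_def)

theorem lemma3p3:
  fixes op1 op2 :: "'a::finite \<Rightarrow> 'a \<Rightarrow> 'a" and e :: 'a and f :: "'a \<Rightarrow> 'a"
  assumes "group \<lparr>carrier = UNIV, mult = op1, one = e\<rparr>"
    and "group \<lparr>carrier = UNIV, mult = op2, one = e\<rparr>"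
    and "bij f"
    and "class_dist op1 op2 = opdist (transport f op1) op2"
  shows "f e = e \<or>
    (\<exists>a b. a \<noteq> b \<and> transport f op1 = transport (transpose a b) op2 \<and>
       class_dist op1 op2 = opdist (transport (transpose a b) op2) op2)"
proof (cases "f e = e")
  case True thus ?thesis by simp
next
  case False
  note G1 = assms(1) and G2 = assms(2)
  define u where "u = f e"
  define l where "l = transpose e u"
  define P where "P = transport f op1"
  define T where "T = transport l op2"
  have ue: "u \<noteq> e" using False u_def by simp
  have bl: "bij l" unfolding l_def by simp
  have GP: "group \<lparr>carrier = UNIV, mult = P, one = u\<rparr>"
    unfolding P_def u_def by (rule transport_group(1)[OF G1 assms(3)])
  have GT: "group \<lparr>carrier = UNIV, mult = T, one = u\<rparr>"
    using transport_group(1)[OF G2 bl] unfolding T_def l_def by simp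
  have Tdef: "\<And>a b. T a b = l (op2 (l a) (l b))"
    unfolding T_def transport_def l_def by simp
  have lfix: "\<And>x. x \<noteq> e \<Longrightarrow> x \<noteq> u \<Longrightarrow> l x = x" unfolding l_def by simp
  have PT: "P = T"
  proof (rule ccontr)
    assume neq: "P \<noteq> T"
    define A where "A = {(a, b). P a b \<noteq> op2 a b}"
    define B where "B = {(a, b). P a b \<noteq> T a b}"
    define D where "D = {(a, b). op2 a b \<noteq> T a b}"
    define C where "C = {(a, b). a = e \<or> a = u \<or> b = e \<or> b = u}"
    define R where "R = {(a::'a, b::'a). a = u \<or> b = u}"
    have RC: "R \<subseteq> C" unfolding R_def C_def by auto
    have CA: "C \<subseteq> A"
    proof
      fix x assume "x \<in> C"
      then obtain a b where x: "x = (a, b)" and c: "a = e \<or> a = u \<or> b = e \<or> b = u"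
        unfolding C_def by auto
      have "P a b \<noteq> op2 a b"
      proof
        assume eq: "P a b = op2 a b"
        from c show False
        proof (elim disjE)
          assume "a = e"
          hence "P a b = b" using eq grp_facts(1)[OF G2] by simp
          hence "a = u" using grp_facts(3)[OF GP] by blast
          thus False using \<open>a = e\<close> ue by simp
        next
          assume "a = u"
          hence "op2 a b = b" using eq grp_facts(1)[OF GP] by simp
          hence "a = e" using grp_facts(3)[OF G2] by blast
          thus False using \<open>a = u\<close> ue by simp
        next
          assume "b = e"
          hence "P a b = a" using eq grp_facts(2)[OF G2] by simp
          hence "b = u" using grp_facts(4)[OF GP] by blast
          thus False using \<open>b = e\<close> ue by simp
        next
          assume "b = u"
          hence "op2 a b = a" using eq grp_facts(2)[OF GP] by simp
          hence "b = e" using grp_facts(4)[OF G2] by blast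
          thus False using \<open>b = u\<close> ue by simp
        qed
      qed
      thus "x \<in> A" unfolding A_def x by simp
    qed
    have BS: "B \<subseteq> (A - C) \<union> (C - R) \<union> (D - C)"
    proof
      fix x assume "x \<in> B"
      then obtain a b where x: "x = (a, b)" and ne: "P a b \<noteq> T a b" unfolding B_def by auto
      have "x \<notin> R"
      proof
        assume "x \<in> R"
        hence "a = u \<or> b = u" unfolding R_def x by simp
        hence "P a b = T a b"
          using grp_facts(1,2)[OF GP] grp_facts(1,2)[OF GT] by auto
        thus False using ne by simp
      qed
      thus "x \<in> (A - C) \<union> (C - R) \<union> (D - C)"
        using ne unfolding A_def D_def x by auto
    qed
    have DC: "card (D - C) < card R"
    proof -
      define h where "h = (\<lambda>(x::'a, y::'a). if op2 x y = e then (u, x) else (x, u))"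
      have key: "\<And>x y. (x, y) \<in> D - C \<Longrightarrow> x \<noteq> e \<and> x \<noteq> u \<and> (op2 x y = e \<or> op2 x y = u)"
      proof -
        fix x y assume xy: "(x, y) \<in> D - C"
        hence ne: "op2 x y \<noteq> T x y" and xe: "x \<noteq> e" "x \<noteq> u" "y \<noteq> e" "y \<noteq> u"
          unfolding D_def C_def by auto
        have "T x y = l (op2 x y)" using Tdef lfix xe by simp
        hence "op2 x y = e \<or> op2 x y = u" using ne lfix by metis
        thus "x \<noteq> e \<and> x \<noteq> u \<and> (op2 x y = e \<or> op2 x y = u)" using xe by simp
      qed
      have inj: "inj_on h (D - C)"
      proof (rule inj_onI)
        fix p q assume p: "p \<in> D - C" and q: "q \<in> D - C" and hpq: "h p = h q"
        obtain x y where pxy: "p = (x, y)" by (cases p)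
        obtain x' y' where qxy: "q = (x', y')" by (cases q)
        have kp: "x \<noteq> e \<and> x \<noteq> u \<and> (op2 x y = e \<or> op2 x y = u)" using key p pxy by simp
        have kq: "x' \<noteq> e \<and> x' \<noteq> u \<and> (op2 x' y' = e \<or> op2 x' y' = u)" using key q qxy by simp
        have "x = x' \<and> op2 x y = op2 x' y'"
          using hpq kp kq ue unfolding h_def pxy qxy by (auto split: if_splits)
        hence "x = x'" "y = y'" using grp_facts(5)[OF G2] by auto
        thus "p = q" using pxy qxy by simp
      qed
      have img: "h ` (D - C) \<subseteq> R - {(u, u)}"
      proof
        fix z assume "z \<in> h ` (D - C)"
        then obtain x y where xy: "(x, y) \<in> D - C" and z: "z = h (x, y)" by auto
        have "x \<noteq> e \<and> x \<noteq> u" using key xy by simp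
        thus "z \<in> R - {(u, u)}" unfolding z h_def R_def by auto
      qed
      have "card (D - C) \<le> card (R - {(u, u)})"
        by (rule card_inj_on_le[OF inj img]) simp
      moreover have "(u, u) \<in> R" unfolding R_def by simp
      hence "card (R - {(u, u)}) < card R" by (intro card_Diff1_less) auto
      ultimately show ?thesis by simp
    qed
    have c1: "card B \<le> card (A - C) + card (C - R) + card (D - C)"
    proof -
      have "card B \<le> card ((A - C) \<union> (C - R) \<union> (D - C))" by (rule card_mono[OF _ BS]) simp
      also have "\<dots> \<le> card ((A - C) \<union> (C - R)) + card (D - C)" by (rule card_Un_le)
      also have "\<dots> \<le> card (A - C) + card (C - R) + card (D - C)" using card_Un_le[of "A - C" "C - R"] by simp
      finally show ?thesis .
    qed
    have c2: "card A = card (A - C) + card C"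
      using card_Diff_subset[of C A] CA card_mono[OF _ CA] by simp
    have c3: "card C = card (C - R) + card R"
      using card_Diff_subset[of R C] RC card_mono[OF _ RC] by simp
    have lt: "card B < card A" using c1 c2 c3 DC by linarith
    define p where "p = transport l P"
    have pap: "\<And>a b. p (l a) (l b) = l (P a b)" unfolding p_def by (rule transport_app[OF bl])
    have sap: "\<And>a b. op2 (l a) (l b) = l (T a b)" using Tdef unfolding l_def by simp
    have pin: "p \<in> iso_class op1"
    proof -
      have "gstr op1 \<cong> gstr P" unfolding P_def by (rule transport_group(2)[OF G1 assms(3)])
      moreover have "gstr P \<cong> gstr p" unfolding p_def by (rule transport_group(2)[OF GP bl])
      ultimately have "gstr op1 \<cong> gstr p" by (rule iso_trans)
      moreover have "is_group_op p" unfolding p_def by (rule transport_group(3)[OF GP bl])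
      ultimately show ?thesis unfolding iso_class_def by simp
    qed
    have qin: "op2 \<in> iso_class op2" by (rule in_iso_class_self[OF G2])
    have pne: "p \<noteq> op2"
    proof
      assume "p = op2"
      hence "\<And>a b. l (P a b) = l (T a b)" using pap sap by metis
      hence "\<And>a b. P a b = T a b" unfolding l_def using transpose_eq_imp_eq by metis
      thus False using neq by blast
    qed
    define m where "m = (\<lambda>(a, b). (l a, l b))"
    have "{(a, b). p a b \<noteq> op2 a b} = m ` B"
    proof (rule Set.set_eqI)
      fix z :: "'a \<times> 'a"
      obtain c d where z: "z = (c, d)" by (cases z)
      have cc: "c = l (l c)" "d = l (l d)" unfolding l_def by simp_all
      have "z \<in> {(a, b). p a b \<noteq> op2 a b} \<longleftrightarrow> P (l c) (l d) \<noteq> T (l c) (l d)"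
        using pap[of "l c" "l d"] sap[of "l c" "l d"] cc z bij_is_inj[OF bl] by (simp add: inj_eq)
      also have "\<dots> \<longleftrightarrow> z \<in> m ` B"
      proof
        assume "P (l c) (l d) \<noteq> T (l c) (l d)"
        hence "(l c, l d) \<in> B" unfolding B_def by simp
        moreover have "z = m (l c, l d)" unfolding m_def z using cc by simp
        ultimately show "z \<in> m ` B" by blast
      next
        assume "z \<in> m ` B"
        then obtain a b where ab: "(a, b) \<in> B" "z = (l a, l b)" unfolding m_def by auto
        hence "a = l c" "b = l d" using z unfolding l_def by auto
        thus "P (l c) (l d) \<noteq> T (l c) (l d)" using ab unfolding B_def by simp
      qed
      finally show "z \<in> {(a, b). p a b \<noteq> op2 a b} \<longleftrightarrow> z \<in> m ` B" .
    qed
    moreover have "inj_on m B"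
      unfolding m_def l_def by (rule inj_onI) (auto dest: transpose_eq_imp_eq)
    ultimately have "opdist p op2 = card B" unfolding opdist_def by (simp add: card_image)
    hence "class_dist op1 op2 \<le> card B" using class_dist_le[OF pin qin pne] by simp
    moreover have "class_dist op1 op2 = card A"
      using assms(4) unfolding opdist_def A_def P_def by simp
    ultimately show False using lt by simp
  qed
  have "e \<noteq> u \<and> transport f op1 = transport (transpose e u) op2 \<and>
       class_dist op1 op2 = opdist (transport (transpose e u) op2) op2"
    using ue PT assms(4) unfolding P_def T_def l_def by simp
  thus ?thesis by blast
qed

end
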